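(* For every positive integer $p$ and every $t\in\{0,\dots,p-1\}$: (1) there exists a $(3p-3t,\ p+3t)$-coloring of $H(3,2p)$ (with main eigenvalue $2p-3$); (2) there exists an $(8p-8t,\ p+8t)$-coloring of $H(4,3p)$ (with main eigenvalue $3p-4$).
   Context: The Hamming graph $H(n,q)$ has vertex set $\mathbb{Z}_q^n$, two vertices adjacent iff they differ in exactly one coordinate. A $(b,c)$-coloring of $H(n,q)$ is a surjective map onto $\{1,2\}$ in which each color-1 vertex has exactly $b$ neighbours of color 2 and each color-2 vertex has exactly $c$ neighbours of color 1; its main eigenvalue is $n(q-1)-(b+c)$. *)

theory Defs
  imports Main
begin

definition hamming_vertices :: "nat \<Rightarrow> nat \<Rightarrow> (nat \<Rightarrow> nat) set" where
  "hamming_vertices n q = {x. (\<forall>i<n. x i < q) \<and> (\<forall>i\<ge>n. x i = 0)}"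

definition hamming_adj :: "nat \<Rightarrow> (nat \<Rightarrow> nat) \<Rightarrow> (nat \<Rightarrow> nat) \<Rightarrow> bool" where
  "hamming_adj n x y \<longleftrightarrow> card {i \<in> {0..<n}. x i \<noteq> y i} = 1"

definition hamming_nbrs :: "nat \<Rightarrow> nat \<Rightarrow> (nat \<Rightarrow> nat) \<Rightarrow> (nat \<Rightarrow> nat) set" where
  "hamming_nbrs n q x = {y \<in> hamming_vertices n q. hamming_adj n x y}"

definition is_bc_coloring ::
  "nat \<Rightarrow> nat \<Rightarrow> nat \<Rightarrow> nat \<Rightarrow> ((nat \<Rightarrow> nat) \<Rightarrow> nat) \<Rightarrow> bool" where
  "is_bc_coloring n q b c f \<longleftrightarrow>
     f ` hamming_vertices n q = {1, 2} \<and>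
     (\<forall>x \<in> hamming_vertices n q. f x = 1 \<longrightarrow>
        card {y \<in> hamming_nbrs n q x. f y = 2} = b) \<and>
     (\<forall>x \<in> hamming_vertices n q. f x = 2 \<longrightarrow>
        card {y \<in> hamming_nbrs n q x. f y = 1} = c)"

definition main_eigenvalue :: "nat \<Rightarrow> nat \<Rightarrow> nat \<Rightarrow> nat \<Rightarrow> int" where
  "main_eigenvalue n q b c = int n * (int q - 1) - (int b + int c)"

end

theory Submission
  imports Defs
begin


lemma mod_inj_aux:
  fixes r r' s p :: nat
  assumes "r' < p" "r \<le> r'" "(r + s) mod p = (r' + s) mod p"
  shows "r = r'"
proof -
  have "p dvd (r' + s) - (r + s)" using mod_eq_dvd_iff_nat[of "r+s" "r'+s" p] assms by simp
  then have d: "p dvd r' - r" by simp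
  have "r' - r < p" using assms by simp
  then have "r' - r = 0" using d by (metis dvd_imp_le not_less neq0_conv)
  then show ?thesis using assms by simp
qed

lemma count_mod:
  assumes "0 < p" "k \<le> p"
  shows "card {r. r < p \<and> (r + s) mod p < k} = k"
proof -
  let ?f = "\<lambda>r. (r + s) mod p"
  have inj: "inj_on ?f {..<p}"
  proof (rule inj_onI)
    fix r r' assume a: "r \<in> {..<p}" "r' \<in> {..<p}" "?f r = ?f r'"
    show "r = r'"
    proof (cases "r \<le> r'")
      case True then show ?thesis using mod_inj_aux[of r' p r s] a by simp
    next
      case False then show ?thesis using mod_inj_aux[of r p r' s] a by simp
    qed
  qed
  have sub: "?f ` {..<p} \<subseteq> {..<p}" using assms by auto
  have cimg: "card (?f ` {..<p}) = card {..<p}" using card_image[OF inj] .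
  have img: "?f ` {..<p} = {..<p}"
    by (rule card_subset_eq[OF _ sub cimg]) simp
  let ?S = "{r. r < p \<and> ?f r < k}"
  have im2: "?f ` ?S = {..<k}"
  proof
    show "?f ` ?S \<subseteq> {..<k}" by auto
    show "{..<k} \<subseteq> ?f ` ?S"
    proof
      fix y assume y: "y \<in> {..<k}"
      then have "y \<in> ?f ` {..<p}" using img assms by auto
      then obtain r where "r < p" "y = ?f r" by auto
      then show "y \<in> ?f ` ?S" using y by auto
    qed
  qed
  have inj2: "inj_on ?f ?S"
    by (rule inj_on_subset[OF inj]) auto
  have "card (?f ` ?S) = card ?S" using card_image[OF inj2] .
  then show ?thesis using im2 by simp
qed

lemma count_block:
  assumes "0 < p" "k \<le> p" "e < m"
  shows "card {a. a < m*p \<and> a div p = e \<and> (a + s) mod p < k} = k"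
proof -
  have "{a. a < m*p \<and> a div p = e \<and> (a + s) mod p < k} = (\<lambda>r. e*p + r) ` {r. r < p \<and> (r + s) mod p < k}"
  proof
    show "{a. a < m*p \<and> a div p = e \<and> (a + s) mod p < k} \<subseteq> (\<lambda>r. e*p + r) ` {r. r < p \<and> (r + s) mod p < k}"
    proof
      fix a assume a: "a \<in> {a. a < m*p \<and> a div p = e \<and> (a + s) mod p < k}"
      have ae: "a = e*p + a mod p" using a div_mult_mod_eq[of a p] by simp
      have "(a mod p + s) mod p = (a + s) mod p" by (simp add: mod_add_left_eq)
      show "a \<in> (\<lambda>r. e*p + r) ` {r. r < p \<and> (r + s) mod p < k}"
      proof (rule image_eqI[where x="a mod p"])
        show "a = e*p + a mod p" by (rule ae)
        show "a mod p \<in> {r. r < p \<and> (r + s) mod p < k}" using a assms \<open>(a mod p + s) mod p = (a + s) mod p\<close> by simp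
      qed
    qed
    show "(\<lambda>r. e*p + r) ` {r. r < p \<and> (r + s) mod p < k} \<subseteq> {a. a < m*p \<and> a div p = e \<and> (a + s) mod p < k}"
    proof
      fix a assume "a \<in> (\<lambda>r. e*p + r) ` {r. r < p \<and> (r + s) mod p < k}"
      then obtain r where r: "r < p" "(r + s) mod p < k" "a = e*p + r" by auto
      have "e*p + r < (e+1)*p" using r by simp
      also have "\<dots> \<le> m*p" using assms by (intro mult_right_mono) auto
      finally have "a < m*p" using r by simp
      moreover have "a div p = e" using r assms by simp
      moreover have "(e*p + r + s) mod p = (r + s) mod p"
        by (metis mod_mult_self1 mod_mult_self2 add.commute add.assoc)
      ultimately show "a \<in> {a. a < m*p \<and> a div p = e \<and> (a + s) mod p < k}" using r by auto
    qed
  qed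
  moreover have "inj (\<lambda>r. e*p + r)" by (auto intro: injI)
  ultimately show ?thesis
    using count_mod[OF assms(1,2)] card_image[OF inj_on_subset[OF \<open>inj (\<lambda>r. e*p + r)\<close> subset_UNIV]] by simp
qed



lemma nbrs_char:
  assumes x: "x \<in> hamming_vertices n q"
  shows "hamming_nbrs n q x = (\<Union>i\<in>{..<n}. (\<lambda>a. x(i:=a)) ` {a. a < q \<and> a \<noteq> x i})"
proof
  show "hamming_nbrs n q x \<subseteq> (\<Union>i\<in>{..<n}. (\<lambda>a. x(i:=a)) ` {a. a < q \<and> a \<noteq> x i})"
  proof
    fix y assume y: "y \<in> hamming_nbrs n q x"
    then have yV: "y \<in> hamming_vertices n q" and c1: "card {i \<in> {0..<n}. x i \<noteq> y i} = 1"
      by (auto simp: hamming_nbrs_def hamming_adj_def)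
    then obtain i where i: "{i \<in> {0..<n}. x i \<noteq> y i} = {i}" by (auto simp: card_1_singleton_iff)
    then have "i < n" "x i \<noteq> y i" by auto
    have "y = x(i := y i)"
    proof
      fix l show "y l = (x(i := y i)) l"
      proof (cases "l = i")
        case False
        show ?thesis
        proof (cases "l < n")
          case True
          have "l \<notin> {i \<in> {0..<n}. x i \<noteq> y i}" using i False by simp
          then show ?thesis using True False by simp
        next
          case False then show ?thesis using x yV \<open>l \<noteq> i\<close> by (auto simp: hamming_vertices_def)
        qed
      qed simp
    qed
    moreover have "y i < q" using yV \<open>i < n\<close> by (auto simp: hamming_vertices_def)
    ultimately show "y \<in> (\<Union>i\<in>{..<n}. (\<lambda>a. x(i:=a)) ` {a. a < q \<and> a \<noteq> x i})"
      using \<open>i < n\<close> \<open>x i \<noteq> y i\<close> by (intro UN_I[of i]) (auto intro!: image_eqI[where x="y i"])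
  qed
  show "(\<Union>i\<in>{..<n}. (\<lambda>a. x(i:=a)) ` {a. a < q \<and> a \<noteq> x i}) \<subseteq> hamming_nbrs n q x"
  proof
    fix y assume "y \<in> (\<Union>i\<in>{..<n}. (\<lambda>a. x(i:=a)) ` {a. a < q \<and> a \<noteq> x i})"
    then obtain i a where ia: "i < n" "a < q" "a \<noteq> x i" "y = x(i:=a)" by auto
    have "y \<in> hamming_vertices n q" using x ia by (auto simp: hamming_vertices_def)
    moreover have "{l \<in> {0..<n}. x l \<noteq> y l} = {i}" using ia by auto
    ultimately show "y \<in> hamming_nbrs n q x" by (simp add: hamming_nbrs_def hamming_adj_def)
  qed
qed

lemma filter_UN_image: "{y \<in> (\<Union>i\<in>I. f i ` A i). P y} = (\<Union>i\<in>I. f i ` {a \<in> A i. P (f i a)})"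
  by auto

lemma card_nbrs:
  assumes x: "x \<in> hamming_vertices n q"
  shows "card {y \<in> hamming_nbrs n q x. P y} = (\<Sum>i<n. card {a. a < q \<and> a \<noteq> x i \<and> P (x(i:=a))})"
proof -
  have eq: "{y \<in> hamming_nbrs n q x. P y} = (\<Union>i\<in>{..<n}. (\<lambda>a. x(i:=a)) ` {a. a < q \<and> a \<noteq> x i \<and> P (x(i:=a))})"
    unfolding nbrs_char[OF x] filter_UN_image by simp
  have "card (\<Union>i\<in>{..<n}. (\<lambda>a. x(i:=a)) ` {a. a < q \<and> a \<noteq> x i \<and> P (x(i:=a))})
       = (\<Sum>i<n. card ((\<lambda>a. x(i:=a)) ` {a. a < q \<and> a \<noteq> x i \<and> P (x(i:=a))}))"
  proof (rule card_UN_disjoint)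
    show "finite {..<n}" by simp
    show "\<forall>i\<in>{..<n}. finite ((\<lambda>a. x(i:=a)) ` {a. a < q \<and> a \<noteq> x i \<and> P (x(i:=a))})" by auto
    show "\<forall>i\<in>{..<n}. \<forall>j\<in>{..<n}. i \<noteq> j \<longrightarrow>
      (\<lambda>a. x(i:=a)) ` {a. a < q \<and> a \<noteq> x i \<and> P (x(i:=a))} \<inter> (\<lambda>a. x(j:=a)) ` {a. a < q \<and> a \<noteq> x j \<and> P (x(j:=a))} = {}"
    proof (intro ballI impI)
      fix i j :: nat assume "i \<noteq> j"
      show "(\<lambda>a. x(i:=a)) ` {a. a < q \<and> a \<noteq> x i \<and> P (x(i:=a))} \<inter> (\<lambda>a. x(j:=a)) ` {a. a < q \<and> a \<noteq> x j \<and> P (x(j:=a))} = {}"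
      proof (rule ccontr)
        assume "\<not> ?thesis"
        then obtain a b where "a \<noteq> x i" "x(i:=a) = x(j:=b)" by auto
        then have "(x(i:=a)) i = (x(j:=b)) i" by simp
        then show False using \<open>i \<noteq> j\<close> \<open>a \<noteq> x i\<close> by simp
      qed
    qed
  qed
  also have "\<dots> = (\<Sum>i<n. card {a. a < q \<and> a \<noteq> x i \<and> P (x(i:=a))})"
  proof (rule sum.cong[OF refl])
    fix i :: nat
    have "inj (\<lambda>a. x(i:=a))"
    proof (rule injI)
      fix a b assume "x(i:=a) = x(i:=b)"
      then have "(x(i:=a)) i = (x(i:=b)) i" by simp
      then show "a = b" by simp
    qed
    then show "card ((\<lambda>a. x(i:=a)) ` {a. a < q \<and> a \<noteq> x i \<and> P (x(i:=a))}) = card {a. a < q \<and> a \<noteq> x i \<and> P (x(i:=a))}"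
      by (rule card_image[OF inj_on_subset[OF _ subset_UNIV]])
  qed
  finally show ?thesis using eq by simp
qed

lemma card_coord:
  assumes x: "x \<in> hamming_vertices n q" and i: "i < n"
  shows "card {a. a < q \<and> a \<noteq> x i \<and> P (x(i:=a))} = card {a. a < q \<and> P (x(i:=a))} - (if P x then 1 else 0)"
proof (cases "P x")
  case True
  have xi: "x i < q" using x i by (auto simp: hamming_vertices_def)
  have "{a. a < q \<and> a \<noteq> x i \<and> P (x(i:=a))} = {a. a < q \<and> P (x(i:=a))} - {x i}" by auto
  moreover have "x i \<in> {a. a < q \<and> P (x(i:=a))}" using xi True by simp
  ultimately show ?thesis using True by simp
next
  case False
  then have "{a. a < q \<and> a \<noteq> x i \<and> P (x(i:=a))} = {a. a < q \<and> P (x(i:=a))}" by auto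
  then show ?thesis using False by simp
qed

lemma card_compl:
  "card {a. a < q \<and> \<not> P a} = q - card {a. a < q \<and> P a}"
proof -
  have "{a. a < q \<and> \<not> P a} = {..<q} - {a. a < q \<and> P a}" by auto
  then show ?thesis by (simp add: card_Diff_subset subset_iff)
qed



definition inblk :: "nat \<Rightarrow> nat \<Rightarrow> nat \<Rightarrow> (nat \<Rightarrow> nat) \<Rightarrow> nat \<times> nat list \<Rightarrow> bool" where
  "inblk n p k x B \<longleftrightarrow> (\<forall>l<n. l \<noteq> fst B \<longrightarrow> x l div p = snd B ! l) \<and> (\<Sum>l\<in>{0..<n}-{fst B}. x l) mod p < k"

definition bD :: "nat \<Rightarrow> nat \<Rightarrow> nat \<Rightarrow> (nat \<times> nat list) list \<Rightarrow> (nat \<Rightarrow> nat) \<Rightarrow> bool" where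
  "bD n p k bl x \<longleftrightarrow> (\<exists>B\<in>set bl. inblk n p k x B)"

lemma sum_if_const:
  assumes "finite A"
  shows "(\<Sum>i\<in>A. if P i then (k::nat) else 0) = k * card {i\<in>A. P i}"
proof -
  have "(\<Sum>i\<in>A. if P i then k else 0) = (\<Sum>i\<in>{i\<in>A. P i}. k)"
    using sum.inter_filter[OF assms, of "\<lambda>i. k" P] by simp
  then show ?thesis by simp
qed

lemma blk_disj:
  assumes disj: "\<forall>B\<in>set bl. \<forall>B'\<in>set bl. B \<noteq> B' \<longrightarrow> (\<exists>l<n. l \<noteq> fst B \<and> l \<noteq> fst B' \<and> snd B ! l \<noteq> snd B' ! l)"
    and "B \<in> set bl" "B' \<in> set bl" "B \<noteq> B'" "inblk n p k y B" "inblk n p k y B'"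
  shows False
proof -
  obtain l where "l < n" "l \<noteq> fst B" "l \<noteq> fst B'" "snd B ! l \<noteq> snd B' ! l"
    using disj assms(2-4) by blast
  moreover have "y l div p = snd B ! l" using assms(5) \<open>l < n\<close> \<open>l \<noteq> fst B\<close> by (simp add: inblk_def)
  moreover have "y l div p = snd B' ! l" using assms(6) \<open>l < n\<close> \<open>l \<noteq> fst B'\<close> by (simp add: inblk_def)
  ultimately show False by simp
qed

lemma blk_same:
  assumes "j = fst B"
  shows "inblk n p k (x(j:=a)) B = inblk n p k x B"
proof -
  have "(\<Sum>l\<in>{0..<n}-{fst B}. (x(j:=a)) l) = (\<Sum>l\<in>{0..<n}-{fst B}. x l)"
    by (rule sum.cong) (use assms in auto)
  moreover have "(\<forall>l<n. l \<noteq> fst B \<longrightarrow> (x(j:=a)) l div p = snd B ! l) = (\<forall>l<n. l \<noteq> fst B \<longrightarrow> x l div p = snd B ! l)"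
    using assms by auto
  ultimately show ?thesis unfolding inblk_def by simp
qed

lemma blk_other:
  assumes "i < n" "i \<noteq> fst B" "snd B ! i < m" "0 < p" "k \<le> p"
  shows "card {a. a < m*p \<and> inblk n p k (x(i:=a)) B} =
         (if (\<forall>l<n. l \<noteq> i \<and> l \<noteq> fst B \<longrightarrow> x l div p = snd B ! l) then k else 0)"
proof -
  let ?j = "fst B"
  let ?s = "\<Sum>l\<in>{0..<n}-{?j}-{i}. x l"
  let ?ag = "\<forall>l<n. l \<noteq> i \<and> l \<noteq> ?j \<longrightarrow> x l div p = snd B ! l"
  have sumeq: "(\<Sum>l\<in>{0..<n}-{?j}. (x(i:=a)) l) = a + ?s" for a
  proof -
    have iin: "i \<in> {0..<n}-{?j}" using assms by auto
    have "(\<Sum>l\<in>{0..<n}-{?j}. (x(i:=a)) l) = (x(i:=a)) i + (\<Sum>l\<in>{0..<n}-{?j}-{i}. (x(i:=a)) l)"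
      using sum.remove[OF _ iin, of "x(i:=a)"] by simp
    also have "(\<Sum>l\<in>{0..<n}-{?j}-{i}. (x(i:=a)) l) = ?s"
      by (rule sum.cong) auto
    finally show ?thesis by simp
  qed
  have allq: "(\<forall>l<n. l \<noteq> ?j \<longrightarrow> (x(i:=a)) l div p = snd B ! l) = (a div p = snd B ! i \<and> ?ag)" for a
  proof
    assume h: "\<forall>l<n. l \<noteq> ?j \<longrightarrow> (x(i:=a)) l div p = snd B ! l"
    have "a div p = snd B ! i" using h[rule_format, of i] assms by simp
    moreover have ?ag
    proof (intro allI impI)
      fix l assume "l < n" "l \<noteq> i \<and> l \<noteq> ?j"
      then show "x l div p = snd B ! l" using h[rule_format, of l] by simp
    qed
    ultimately show "a div p = snd B ! i \<and> ?ag" by simp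
  next
    assume h: "a div p = snd B ! i \<and> ?ag"
    show "\<forall>l<n. l \<noteq> ?j \<longrightarrow> (x(i:=a)) l div p = snd B ! l"
    proof (intro allI impI)
      fix l assume l: "l < n" "l \<noteq> ?j"
      show "(x(i:=a)) l div p = snd B ! l"
      proof (cases "l = i")
        case True then show ?thesis using h by simp
      next
        case False then show ?thesis using h l by simp
      qed
    qed
  qed
  have eqv: "inblk n p k (x(i:=a)) B = (?ag \<and> a div p = snd B ! i \<and> (a + ?s) mod p < k)" for a
    unfolding inblk_def using allq[of a] sumeq[of a] by auto
  show ?thesis
  proof (cases ?ag)
    case True
    have "{a. a < m*p \<and> inblk n p k (x(i:=a)) B} = {a. a < m*p \<and> a div p = snd B ! i \<and> (a + ?s) mod p < k}"
      using True eqv by auto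
    then show ?thesis using True count_block[OF assms(4,5,3)] by simp
  next
    case False
    have "{a. a < m*p \<and> inblk n p k (x(i:=a)) B} = {}"
      using False eqv by auto
    then have "card {a. a < m*p \<and> inblk n p k (x(i:=a)) B} = 0" by simp
    then show ?thesis unfolding if_not_P[OF False] .
  qed
qed



definition wfb :: "nat \<Rightarrow> nat \<Rightarrow> (nat \<times> nat list) list \<Rightarrow> bool" where
  "wfb n m bl \<longleftrightarrow> (\<forall>B\<in>set bl. fst B < n \<and> (\<forall>l<n. snd B ! l < m))"

definition disjb :: "nat \<Rightarrow> (nat \<times> nat list) list \<Rightarrow> bool" where
  "disjb n bl \<longleftrightarrow> (\<forall>B\<in>set bl. \<forall>B'\<in>set bl. B \<noteq> B' \<longrightarrow> (\<exists>l<n. l \<noteq> fst B \<and> l \<noteq> fst B' \<and> snd B ! l \<noteq> snd B' ! l))"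

definition Kb :: "nat \<Rightarrow> nat \<Rightarrow> (nat \<times> nat list) list \<Rightarrow> nat \<Rightarrow> bool" where
  "Kb n m bl K \<longleftrightarrow> (\<forall>e. (\<forall>l<n. e l < m) \<longrightarrow>
     (\<Sum>B\<in>set bl. card {i. i < n \<and> i \<noteq> fst B \<and> (\<forall>l<n. l \<noteq> i \<and> l \<noteq> fst B \<longrightarrow> e l = snd B ! l)}) = K)"

lemma cnt_coord:
  assumes "disjb n bl"
  shows "card {a. a < q \<and> bD n p k bl (x(i:=a))} = (\<Sum>B\<in>set bl. card {a. a < q \<and> inblk n p k (x(i:=a)) B})"
proof -
  have "{a. a < q \<and> bD n p k bl (x(i:=a))} = (\<Union>B\<in>set bl. {a. a < q \<and> inblk n p k (x(i:=a)) B})"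
    by (auto simp: bD_def)
  moreover have "card (\<Union>B\<in>set bl. {a. a < q \<and> inblk n p k (x(i:=a)) B}) = (\<Sum>B\<in>set bl. card {a. a < q \<and> inblk n p k (x(i:=a)) B})"
  proof (rule card_UN_disjoint)
    show "finite (set bl)" by simp
    show "\<forall>B\<in>set bl. finite {a. a < q \<and> inblk n p k (x(i:=a)) B}" by simp
    show "\<forall>B\<in>set bl. \<forall>B'\<in>set bl. B \<noteq> B' \<longrightarrow> {a. a < q \<and> inblk n p k (x(i:=a)) B} \<inter> {a. a < q \<and> inblk n p k (x(i:=a)) B'} = {}"
      using blk_disj[OF assms[unfolded disjb_def]] by blast
  qed
  ultimately show ?thesis by simp
qed

lemma per_block:
  assumes B: "B \<in> set bl" and wf: "wfb n m bl" and p: "0 < p" "k \<le> p"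
  shows "(\<Sum>i<n. card {a. a < m*p \<and> inblk n p k (x(i:=a)) B}) =
    m*p*(if inblk n p k x B then 1 else 0) + k * card {i. i < n \<and> i \<noteq> fst B \<and> (\<forall>l<n. l \<noteq> i \<and> l \<noteq> fst B \<longrightarrow> x l div p = snd B ! l)}"
proof -
  let ?j = "fst B"
  let ?g = "\<lambda>i. card {a. a < m*p \<and> inblk n p k (x(i:=a)) B}"
  let ?ag = "\<lambda>i. \<forall>l<n. l \<noteq> i \<and> l \<noteq> fst B \<longrightarrow> x l div p = snd B ! l"
  have j: "?j < n" and bnd: "\<forall>l<n. snd B ! l < m" using wf B by (auto simp: wfb_def)
  have jin: "?j \<in> {..<n}" using j by simp
  have "(\<Sum>i<n. ?g i) = ?g ?j + (\<Sum>i\<in>{..<n}-{?j}. ?g i)"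
    using sum.remove[OF _ jin, of ?g] by simp
  moreover have "?g ?j = m*p*(if inblk n p k x B then 1 else 0)"
  proof -
    have "{a. a < m*p \<and> inblk n p k (x(?j:=a)) B} = {a. a < m*p \<and> inblk n p k x B}"
      using blk_same[of ?j B n p k x] by simp
    then show ?thesis by simp
  qed
  moreover have "(\<Sum>i\<in>{..<n}-{?j}. ?g i) = (\<Sum>i\<in>{..<n}-{?j}. if ?ag i then k else 0)"
  proof (rule sum.cong[OF refl])
    fix i assume "i \<in> {..<n}-{?j}"
    then have "i < n" "i \<noteq> ?j" by auto
    then show "?g i = (if ?ag i then k else 0)"
      using blk_other[of i n B m p k x] bnd p by simp
  qed
  moreover have "(\<Sum>i\<in>{..<n}-{?j}. if ?ag i then k else 0) = k * card {i\<in>{..<n}-{?j}. ?ag i}"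
    by (rule sum_if_const) simp
  moreover have "{i\<in>{..<n}-{?j}. ?ag i} = {i. i < n \<and> i \<noteq> fst B \<and> ?ag i}" by auto
  ultimately show ?thesis by simp
qed

lemma total_count:
  assumes x: "x \<in> hamming_vertices n (m*p)" and wf: "wfb n m bl" and dj: "disjb n bl"
    and K: "Kb n m bl K" and p: "0 < p" "k \<le> p"
  shows "(\<Sum>i<n. card {a. a < m*p \<and> bD n p k bl (x(i:=a))}) = K*k + m*p*(if bD n p k bl x then 1 else 0)"
proof -
  let ?ag = "\<lambda>B i. \<forall>l<n. l \<noteq> i \<and> l \<noteq> fst B \<longrightarrow> x l div p = snd B ! l"
  have "(\<Sum>i<n. card {a. a < m*p \<and> bD n p k bl (x(i:=a))}) =
        (\<Sum>i<n. \<Sum>B\<in>set bl. card {a. a < m*p \<and> inblk n p k (x(i:=a)) B})"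
    by (simp add: cnt_coord[OF dj])
  also have "\<dots> = (\<Sum>B\<in>set bl. \<Sum>i<n. card {a. a < m*p \<and> inblk n p k (x(i:=a)) B})"
    by (rule sum.swap)
  also have "\<dots> = (\<Sum>B\<in>set bl. m*p*(if inblk n p k x B then 1 else 0) + k * card {i. i < n \<and> i \<noteq> fst B \<and> ?ag B i})"
    by (rule sum.cong[OF refl]) (rule per_block[OF _ wf p])
  also have "\<dots> = m*p*(\<Sum>B\<in>set bl. if inblk n p k x B then 1 else 0) + k * (\<Sum>B\<in>set bl. card {i. i < n \<and> i \<noteq> fst B \<and> ?ag B i})"
    by (simp add: sum.distrib sum_distrib_left)
  also have "(\<Sum>B\<in>set bl. card {i. i < n \<and> i \<noteq> fst B \<and> ?ag B i}) = K"
  proof -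
    have "\<forall>l<n. x l div p < m"
    proof (intro allI impI)
      fix l assume "l < n"
      then have "x l < m*p" using x by (auto simp: hamming_vertices_def)
      then show "x l div p < m" by (simp add: less_mult_imp_div_less)
    qed
    then show ?thesis using K unfolding Kb_def by (rule_tac allE, auto)
  qed
  also have "(\<Sum>B\<in>set bl. if inblk n p k x B then 1 else 0) = (if bD n p k bl x then 1 else (0::nat))"
  proof -
    have s: "(\<Sum>B\<in>set bl. if inblk n p k x B then 1 else 0) = 1 * card {B\<in>set bl. inblk n p k x B}"
      by (rule sum_if_const) simp
    show ?thesis
    proof (cases "bD n p k bl x")
      case True
      then obtain B0 where B0: "B0 \<in> set bl" "inblk n p k x B0" by (auto simp: bD_def)
      have "{B\<in>set bl. inblk n p k x B} = {B0}"
        using B0 blk_disj[OF dj[unfolded disjb_def]] by blast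
      then show ?thesis using s True by simp
    next
      case False
      then have "{B\<in>set bl. inblk n p k x B} = {}" by (auto simp: bD_def)
      then show ?thesis using s False by simp
    qed
  qed
  also have "m*p*(if bD n p k bl x then 1 else 0) + k * K = K*k + m*p*(if bD n p k bl x then 1 else 0)"
    by simp
  finally show ?thesis .
qed



theorem block_coloring:
  assumes p: "0 < p" "1 \<le> k" "k \<le> p" and wf: "wfb n m bl" and dj: "disjb n bl" and K: "Kb n m bl K"
    and ne: "bl \<noteq> []"
    and e0: "\<forall>l<n. e0 l < m" and unc: "\<forall>B\<in>set bl. \<not> (\<forall>l<n. l \<noteq> fst B \<longrightarrow> e0 l = snd B ! l)"
  shows "is_bc_coloring n (m*p) (K*k) (n*(m*p) - K*k - m*p) (\<lambda>x. if bD n p k bl x then 2 else 1)"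
proof -
  let ?q = "m*p"
  let ?f = "\<lambda>x. if bD n p k bl x then 2 else (1::nat)"
  let ?c = "\<lambda>x i. card {a. a < ?q \<and> bD n p k bl (x(i:=a))}"
  have tc: "x \<in> hamming_vertices n ?q \<Longrightarrow> (\<Sum>i<n. ?c x i) = K*k + ?q*(if bD n p k bl x then 1 else 0)" for x
    using total_count[OF _ wf dj K p(1,3)] by simp
  have cnt2: "card {y \<in> hamming_nbrs n ?q x. ?f y = 2} = K*k"
    if x: "x \<in> hamming_vertices n ?q" and nd: "\<not> bD n p k bl x" for x
  proof -
    have "{y \<in> hamming_nbrs n ?q x. ?f y = 2} = {y \<in> hamming_nbrs n ?q x. bD n p k bl y}" by auto
    then have "card {y \<in> hamming_nbrs n ?q x. ?f y = 2} = (\<Sum>i<n. card {a. a < ?q \<and> a \<noteq> x i \<and> bD n p k bl (x(i:=a))})"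
      using card_nbrs[OF x] by simp
    also have "\<dots> = (\<Sum>i<n. ?c x i)"
      by (rule sum.cong[OF refl]) (use card_coord[OF x] nd in simp)
    also have "\<dots> = K*k" using tc[OF x] nd by simp
    finally show ?thesis .
  qed
  have cnt1: "card {y \<in> hamming_nbrs n ?q x. ?f y = 1} = n*?q - K*k - ?q"
    if x: "x \<in> hamming_vertices n ?q" and d: "bD n p k bl x" for x
  proof -
    have "{y \<in> hamming_nbrs n ?q x. ?f y = 1} = {y \<in> hamming_nbrs n ?q x. \<not> bD n p k bl y}" by auto
    then have "card {y \<in> hamming_nbrs n ?q x. ?f y = 1} = (\<Sum>i<n. card {a. a < ?q \<and> a \<noteq> x i \<and> \<not> bD n p k bl (x(i:=a))})"
      using card_nbrs[OF x] by simp
    also have "\<dots> = (\<Sum>i<n. ?q - ?c x i)"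
    proof (rule sum.cong[OF refl])
      fix i assume "i \<in> {..<n}"
      then have "card {a. a < ?q \<and> a \<noteq> x i \<and> \<not> bD n p k bl (x(i:=a))} = card {a. a < ?q \<and> \<not> bD n p k bl (x(i:=a))}"
        using card_coord[OF x, of i "\<lambda>y. \<not> bD n p k bl y"] d by simp
      also have "\<dots> = ?q - ?c x i" by (rule card_compl)
      finally show "card {a. a < ?q \<and> a \<noteq> x i \<and> \<not> bD n p k bl (x(i:=a))} = ?q - ?c x i" .
    qed
    also have "\<dots> = (\<Sum>i<n. ?q) - (\<Sum>i<n. ?c x i)"
    proof (rule sum_subtractf_nat)
      fix i show "?c x i \<le> ?q"
        using card_mono[of "{a. a < ?q}" "{a. a < ?q \<and> bD n p k bl (x(i:=a))}"] by auto
    qed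
    also have "\<dots> = n*?q - (K*k + ?q)" using tc[OF x] d by simp
    finally show ?thesis by simp
  qed
  obtain B0 where B0: "B0 \<in> set bl" using ne by (cases bl) auto
  have B0w: "fst B0 < n" "\<forall>l<n. snd B0 ! l < m" using wf B0 by (auto simp: wfb_def)
  define x1 where "x1 = (\<lambda>l. if l < n then snd B0 ! l * p else 0)"
  define x0 where "x0 = (\<lambda>l. if l < n then e0 l * p else 0)"
  have lt: "a < m \<Longrightarrow> a * p < m * p" for a using p by simp
  have x1V: "x1 \<in> hamming_vertices n ?q" using B0w lt by (auto simp: x1_def hamming_vertices_def)
  have x0V: "x0 \<in> hamming_vertices n ?q" using e0 lt by (auto simp: x0_def hamming_vertices_def)
  have "inblk n p k x1 B0"
  proof -
    have "\<forall>l<n. l \<noteq> fst B0 \<longrightarrow> x1 l div p = snd B0 ! l" using p by (simp add: x1_def)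
    moreover have "p dvd (\<Sum>l\<in>{0..<n}-{fst B0}. x1 l)"
      by (rule dvd_sum) (simp add: x1_def)
    then have "(\<Sum>l\<in>{0..<n}-{fst B0}. x1 l) mod p = 0" by simp
    ultimately show ?thesis using p by (simp add: inblk_def)
  qed
  then have d1: "bD n p k bl x1" using B0 by (auto simp: bD_def)
  have d0: "\<not> bD n p k bl x0"
  proof
    assume "bD n p k bl x0"
    then obtain B where B: "B \<in> set bl" "inblk n p k x0 B" by (auto simp: bD_def)
    then have "\<forall>l<n. l \<noteq> fst B \<longrightarrow> e0 l = snd B ! l" using p by (auto simp: inblk_def x0_def)
    then show False using unc B by blast
  qed
  have img: "?f ` hamming_vertices n ?q = {1, 2}"
  proof
    show "?f ` hamming_vertices n ?q \<subseteq> {1, 2}" by auto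
    have "1 \<in> ?f ` hamming_vertices n ?q" using x0V d0 by (auto intro!: image_eqI[where x=x0])
    moreover have "2 \<in> ?f ` hamming_vertices n ?q" using x1V d1 by (auto intro!: image_eqI[where x=x1])
    ultimately show "{1, 2} \<subseteq> ?f ` hamming_vertices n ?q" by auto
  qed
  show ?thesis
    unfolding is_bc_coloring_def
  proof (intro conjI ballI impI)
    show "?f ` hamming_vertices n ?q = {1, 2}" by (rule img)
  next
    fix x assume xv: "x \<in> hamming_vertices n ?q" and fx: "?f x = 1"
    have "\<not> bD n p k bl x" using fx by (cases "bD n p k bl x") simp_all
    then show "card {y \<in> hamming_nbrs n ?q x. ?f y = 2} = K*k"
      by (rule cnt2[OF xv])
  next
    fix x assume xv: "x \<in> hamming_vertices n ?q" and fx: "?f x = 2"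
    have "bD n p k bl x" using fx by (cases "bD n p k bl x") simp_all
    then show "card {y \<in> hamming_nbrs n ?q x. ?f y = 1} = n*?q - K*k - ?q"
      by (rule cnt1[OF xv])
  qed
qed



lemma Kb_from_list:
  assumes dist: "distinct bl"
    and chk: "list_all (\<lambda>es. (\<Sum>B\<leftarrow>bl. length (filter (\<lambda>i. i \<noteq> fst B \<and> list_all (\<lambda>l. l = i \<or> l = fst B \<or> es ! l = snd B ! l) [0..<n]) [0..<n])) = K) (List.n_lists n [0..<m])"
  shows "Kb n m bl K"
  unfolding Kb_def
proof (intro allI impI)
  fix e assume e: "\<forall>l<n. e l < m"
  let ?es = "map e [0..<n]"
  have es: "?es \<in> set (List.n_lists n [0..<m])" using e by (auto simp: set_n_lists)
  have eq: "card {i. i < n \<and> i \<noteq> fst B \<and> (\<forall>l<n. l \<noteq> i \<and> l \<noteq> fst B \<longrightarrow> e l = snd B ! l)}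
      = length (filter (\<lambda>i. i \<noteq> fst B \<and> list_all (\<lambda>l. l = i \<or> l = fst B \<or> ?es ! l = snd B ! l) [0..<n]) [0..<n])" for B
  proof -
    have "length (filter (\<lambda>i. i \<noteq> fst B \<and> list_all (\<lambda>l. l = i \<or> l = fst B \<or> ?es ! l = snd B ! l) [0..<n]) [0..<n])
      = card {i. i < n \<and> (i \<noteq> fst B \<and> list_all (\<lambda>l. l = i \<or> l = fst B \<or> ?es ! l = snd B ! l) [0..<n])}"
      unfolding length_filter_conv_card by (intro arg_cong[where f=card] Collect_cong) auto
    also have "{i. i < n \<and> (i \<noteq> fst B \<and> list_all (\<lambda>l. l = i \<or> l = fst B \<or> ?es ! l = snd B ! l) [0..<n])}
       = {i. i < n \<and> i \<noteq> fst B \<and> (\<forall>l<n. l \<noteq> i \<and> l \<noteq> fst B \<longrightarrow> e l = snd B ! l)}"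
      by (auto simp: list_all_iff)
    finally show ?thesis by simp
  qed
  have "(\<Sum>B\<in>set bl. card {i. i < n \<and> i \<noteq> fst B \<and> (\<forall>l<n. l \<noteq> i \<and> l \<noteq> fst B \<longrightarrow> e l = snd B ! l)})
     = (\<Sum>B\<leftarrow>bl. card {i. i < n \<and> i \<noteq> fst B \<and> (\<forall>l<n. l \<noteq> i \<and> l \<noteq> fst B \<longrightarrow> e l = snd B ! l)})"
    by (simp add: sum_list_distinct_conv_sum_set[OF dist])
  also have "\<dots> = (\<Sum>B\<leftarrow>bl. length (filter (\<lambda>i. i \<noteq> fst B \<and> list_all (\<lambda>l. l = i \<or> l = fst B \<or> ?es ! l = snd B ! l) [0..<n]) [0..<n]))"
    by (simp only: eq)
  also have "\<dots> = K"
  proof -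
    have chk': "\<forall>x\<in>set (List.n_lists n [0..<m]). (\<Sum>B\<leftarrow>bl. length (filter (\<lambda>i. i \<noteq> fst B \<and> list_all (\<lambda>l. l = i \<or> l = fst B \<or> x ! l = snd B ! l) [0..<n]) [0..<n])) = K"
      using chk by (simp only: list_all_iff[of _ "List.n_lists n [0..<m]"])
    show ?thesis using bspec[OF chk' es] by simp
  qed
  finally show "(\<Sum>B\<in>set bl. card {i. i < n \<and> i \<noteq> fst B \<and> (\<forall>l<n. l \<noteq> i \<and> l \<noteq> fst B \<longrightarrow> e l = snd B ! l)}) = K" .
qed

lemma disjb_from_list:
  assumes "list_all (\<lambda>B. list_all (\<lambda>B'. B = B' \<or> list_ex (\<lambda>l. l \<noteq> fst B \<and> l \<noteq> fst B' \<and> snd B ! l \<noteq> snd B' ! l) [0..<n]) bl) bl"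
  shows "disjb n bl"
  unfolding disjb_def
proof (intro ballI impI)
  fix B B' assume h: "B \<in> set bl" "B' \<in> set bl" "B \<noteq> B'"
  obtain l where "l \<in> set [0..<n]" "l \<noteq> fst B \<and> l \<noteq> fst B' \<and> snd B ! l \<noteq> snd B' ! l"
    using assms h unfolding list_all_iff list_ex_iff by blast
  then show "\<exists>l<n. l \<noteq> fst B \<and> l \<noteq> fst B' \<and> snd B ! l \<noteq> snd B' ! l" by auto
qed

lemma wfb_from_list:
  assumes "list_all (\<lambda>B. fst B < n \<and> list_all (\<lambda>l. snd B ! l < m) [0..<n]) bl"
  shows "wfb n m bl"
  using assms unfolding wfb_def list_all_iff by auto

lemma unc_from_list:
  assumes "list_all (\<lambda>B. list_ex (\<lambda>l. l \<noteq> fst B \<and> es ! l \<noteq> snd B ! l) [0..<n]) bl"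
  shows "\<forall>B\<in>set bl. \<not> (\<forall>l<n. l \<noteq> fst B \<longrightarrow> es ! l = snd B ! l)"
proof (intro ballI notI)
  fix B assume h: "B \<in> set bl" "\<forall>l<n. l \<noteq> fst B \<longrightarrow> es ! l = snd B ! l"
  obtain l where "l \<in> set [0..<n]" "l \<noteq> fst B \<and> es ! l \<noteq> snd B ! l"
    using assms h(1) unfolding list_all_iff list_ex_iff by blast
  then show False using h(2) by auto
qed

definition bl3 :: "(nat \<times> nat list) list" where
  "bl3 = [(2,[0,0,0]),(1,[1,0,1]),(0,[0,1,0])]"

definition bl4 :: "(nat \<times> nat list) list" where
  "bl4 = [(0, [0, 0, 0, 1]), (0, [0, 0, 0, 2]), (0, [0, 0, 1, 0]), (0, [0, 0, 1, 2]), (0, [0, 1, 1, 0]), (0, [0, 2, 0, 1]),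
          (1, [0, 0, 1, 1]), (1, [1, 0, 0, 0]), (1, [2, 0, 1, 1]), (1, [2, 0, 2, 0]), (1, [2, 0, 0, 0]), (1, [2, 0, 2, 1]),
          (2, [0, 2, 0, 0]), (2, [0, 2, 0, 2]), (2, [1, 1, 0, 1]), (2, [1, 1, 0, 2]), (2, [2, 1, 0, 2]), (2, [2, 2, 0, 2]),
          (3, [0, 0, 2, 0]), (3, [0, 1, 0, 0]), (3, [0, 1, 2, 0]), (3, [1, 0, 2, 0]), (3, [1, 2, 1, 0]), (3, [1, 2, 2, 0])]"

lemma bl3_props: "wfb 3 2 bl3" "disjb 3 bl3" "Kb 3 2 bl3 3"
    "\<forall>B\<in>set bl3. \<not> (\<forall>l<3. l \<noteq> fst B \<longrightarrow> [1,0,0::nat] ! l = snd B ! l)"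
proof -
  show "wfb 3 2 bl3" by (rule wfb_from_list) (simp add: bl3_def upt_rec)
  show "disjb 3 bl3" by (rule disjb_from_list) (simp add: bl3_def upt_rec)
  show "Kb 3 2 bl3 3" by (rule Kb_from_list; code_simp)
  show "\<forall>B\<in>set bl3. \<not> (\<forall>l<3. l \<noteq> fst B \<longrightarrow> [1,0,0::nat] ! l = snd B ! l)"
    by (rule unc_from_list) (simp add: bl3_def upt_rec)
qed

lemma bl4_props: "wfb 4 3 bl4" "disjb 4 bl4" "Kb 4 3 bl4 8"
    "\<forall>B\<in>set bl4. \<not> (\<forall>l<4. l \<noteq> fst B \<longrightarrow> [0,0,0,0::nat] ! l = snd B ! l)"
proof -
  show "wfb 4 3 bl4" by (rule wfb_from_list; code_simp)
  show "disjb 4 bl4" by (rule disjb_from_list; code_simp)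
  show "Kb 4 3 bl4 8" by (rule Kb_from_list; code_simp)
  show "\<forall>B\<in>set bl4. \<not> (\<forall>l<4. l \<noteq> fst B \<longrightarrow> [0,0,0,0::nat] ! l = snd B ! l)"
    by (rule unc_from_list; code_simp)
qed


theorem corollary2:
  fixes p t :: nat
  assumes "p \<ge> 1" and "t < p"
  shows "(\<exists>f. is_bc_coloring 3 (2*p) (3*p - 3*t) (p + 3*t) f)
           \<and> main_eigenvalue 3 (2*p) (3*p - 3*t) (p + 3*t) = 2 * int p - 3
         \<and> (\<exists>f. is_bc_coloring 4 (3*p) (8*p - 8*t) (p + 8*t) f)
           \<and> main_eigenvalue 4 (3*p) (8*p - 8*t) (p + 8*t) = 3 * int p - 4"
proof -
  have p0: "0 < p" using assms by simp
  have k1: "1 \<le> p - t" and k2: "p - t \<le> p" using assms by auto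
  have e3: "\<forall>l<3. ([1,0,0]::nat list) ! l < 2"
    unfolding numeral_3_eq_3 by (auto simp: less_Suc_eq)
  have e4: "\<forall>l<4. ([0,0,0,0]::nat list) ! l < 3"
    by (auto simp: less_Suc_eq eval_nat_numeral)
  have ne3: "bl3 \<noteq> []" by (simp add: bl3_def)
  have ne4: "bl4 \<noteq> []" by (simp add: bl4_def)
  have c3: "is_bc_coloring 3 (2*p) (3*(p-t)) (3*(2*p) - 3*(p-t) - 2*p) (\<lambda>x. if bD 3 p (p-t) bl3 x then 2 else 1)"
    by (rule block_coloring[OF p0 k1 k2 bl3_props(1,2,3) ne3 e3 bl3_props(4)])
  have c4: "is_bc_coloring 4 (3*p) (8*(p-t)) (4*(3*p) - 8*(p-t) - 3*p) (\<lambda>x. if bD 4 p (p-t) bl4 x then 2 else 1)"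
    by (rule block_coloring[OF p0 k1 k2 bl4_props(1,2,3) ne4 e4 bl4_props(4)])
  have a1: "3*(p-t) = 3*p - 3*t" "3*(2*p) - 3*(p-t) - 2*p = p + 3*t" using assms by arith+
  have a2: "8*(p-t) = 8*p - 8*t" "4*(3*p) - 8*(p-t) - 3*p = p + 8*t" using assms by arith+
  have i1: "int (3*p - 3*t) = 3 * int p - 3 * int t" using assms by (simp add: of_nat_diff)
  have i2: "int (8*p - 8*t) = 8 * int p - 8 * int t" using assms by (simp add: of_nat_diff)
  show ?thesis
  proof (intro conjI)
    show "\<exists>f. is_bc_coloring 3 (2*p) (3*p - 3*t) (p + 3*t) f" using c3 unfolding a1(2) unfolding a1(1) by blast
    show "\<exists>f. is_bc_coloring 4 (3*p) (8*p - 8*t) (p + 8*t) f" using c4 unfolding a2(2) unfolding a2(1) by blast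
    show "main_eigenvalue 3 (2*p) (3*p - 3*t) (p + 3*t) = 2 * int p - 3"
      unfolding main_eigenvalue_def i1 using assms by simp
    show "main_eigenvalue 4 (3*p) (8*p - 8*t) (p + 8*t) = 3 * int p - 4"
      unfolding main_eigenvalue_def i2 using assms by simp
  qed
qed

end
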